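(* Let $k=1$, $\gamma>0$, $\delta>1$, and $Z=\{(\tau,s)\in\mathcal C:g(\tau,s)=0\}$. (a) If $1<\delta<\Phi$ and $\gamma>M_{\mathcal F}(\delta)/2$, then $Z\cap(\{\tau\}\times S^1)$ has exactly two points for every $\tau\in(0,1)$ and is the single point $(1,3\pi/2)$ for $\tau=1$; moreover all points of $Z\cap(\{\tau\}\times S^1)$ converge to $s=3\pi/2$ as $\tau\to0^+$ (so $Z$ closes up to a contractible closed curve with "fold points" at $\tau=0$ and $\tau=1$). (b) If $1<\delta<\Phi$ and $0<\gamma<M_{\mathcal F}(\delta)/2$, then there are $0<a<b<1$ such that $Z\cap(\{\tau\}\times S^1)$ has exactly two points for $\tau\in(0,a)\cup(b,1)$, is the single point $(\tau,\pi/2)$ for $\tau\in\{a,b\}$, is empty for $\tau\in(a,b)$, and is the single point $(1,3\pi/2)$ for $\tau=1$; $(a,\pi/2)$ is a subcritical and $(b,\pi/2)$ a supercritical fold point, and the points of $Z\cap(\{\tau\}\times S^1)$ converge to $s=3\pi/2$ as $\tau\to0^+$. (c) If $\delta>\Phi$, then there is $\tau_0\in(0,1)$ such that $Z\cap(\{\tau\}\times S^1)$ is empty for $\tau<\tau_0$, is the single point $(\tau_0,\pi/2)$ for $\tau=\tau_0$, has exactly two points for $\tau\in(\tau_0,1)$, and is the single point $(1,3\pi/2)$ for $\tau=1$; $(\tau_0,\pi/2)$ is a supercritical fold point and $(1,3\pi/2)$ is a fold point.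
   Context: Let $S^1=\mathbb R/2\pi\mathbb Z$ and $\mathcal C=\{(\tau,s):0<\tau\le1,\ s\in S^1\}$. Let $p(\delta)=-\delta^2+\delta+1$, $\Phi=(1+\sqrt5)/2$. For parameters $\delta>1$, $\gamma>0$, $k>0$ define $g:\mathcal C\to\mathbb R$, $g(\tau,s)=\tau^{\delta^2}+\gamma\tau^{\delta^2-\delta}(1+k\sin s)-\tau$; thus $g(\tau,s)=0$ iff $\gamma(1+k\sin s)=\mathcal F_\delta(\tau)$, where $\mathcal F_\delta(\tau)=\tau^{p(\delta)}-\tau^\delta$. For $1<\delta<\Phi$, $M_{\mathcal F}(\delta)=\max_{(0,1]}\mathcal F_\delta>0$. A fold point is a point $(\tau_0,s_0)\in\mathcal C$ with $g(\tau_0,s_0)=0$ and $\partial g/\partial s(\tau_0,s_0)=0$. It is supercritical if there is a neighbourhood $U$ of $(\tau_0,s_0)$ such that for $\tau>\tau_0$ close to $\tau_0$ the set $\{s:(\tau,s)\in U,\ g(\tau,s)=0\}$ has exactly two elements, for $\tau=\tau_0$ exactly one, and for $\tau<\tau_0$ close to $\tau_0$ none; subcritical if the same holds with the roles of $\tau>\tau_0$ and $\tau<\tau_0$ interchanged. *)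

theory Defs
  imports "HOL-Analysis.Analysis"
begin

text \<open>Points of S^1 = R/2piZ are represented by real numbers; a fibre of the zero
set over tau is represented by its representatives in [0, 2pi).\<close>

definition p_exp :: "real \<Rightarrow> real" where
  "p_exp \<delta> = 1 + \<delta> - \<delta> ^ 2"

definition Phi :: real where
  "Phi = (1 + sqrt 5) / 2"

definition F_fun :: "real \<Rightarrow> real \<Rightarrow> real" where
  "F_fun \<delta> \<tau> = \<tau> powr (p_exp \<delta>) - \<tau> powr \<delta>"

definition M_F :: "real \<Rightarrow> real" where
  "M_F \<delta> = (SUP \<tau>\<in>{0<..1}. F_fun \<delta> \<tau>)"

definition g_fun :: "real \<Rightarrow> real \<Rightarrow> real \<Rightarrow> real \<Rightarrow> real \<Rightarrow> real" where
  "g_fun \<delta> \<gamma> k \<tau> s =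
     \<tau> powr (\<delta> ^ 2) + \<gamma> * \<tau> powr (\<delta> ^ 2 - \<delta>) * (1 + k * sin s) - \<tau>"

definition fibre :: "real \<Rightarrow> real \<Rightarrow> real \<Rightarrow> real \<Rightarrow> real set" where
  "fibre \<delta> \<gamma> k \<tau> = {s \<in> {0..<2*pi}. 0 < \<tau> \<and> \<tau> \<le> 1 \<and> g_fun \<delta> \<gamma> k \<tau> s = 0}"

definition fold_point :: "real \<Rightarrow> real \<Rightarrow> real \<Rightarrow> real \<Rightarrow> real \<Rightarrow> bool" where
  "fold_point \<delta> \<gamma> k \<tau>0 s0 \<longleftrightarrow>
     0 < \<tau>0 \<and> \<tau>0 \<le> 1 \<and> g_fun \<delta> \<gamma> k \<tau>0 s0 = 0 \<and>
     deriv (\<lambda>s. g_fun \<delta> \<gamma> k \<tau>0 s) s0 = 0"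

text \<open>Zeros of g in a neighbourhood U (a lift to R x R of a neighbourhood in the
cylinder; it is required to have s-width less than 2pi so that it projects injectively).\<close>
definition local_zeros :: "real \<Rightarrow> real \<Rightarrow> real \<Rightarrow> (real \<times> real) set \<Rightarrow> real \<Rightarrow> real set" where
  "local_zeros \<delta> \<gamma> k U \<tau> = {s. (\<tau>, s) \<in> U \<and> 0 < \<tau> \<and> \<tau> \<le> 1 \<and> g_fun \<delta> \<gamma> k \<tau> s = 0}"

definition supercritical :: "real \<Rightarrow> real \<Rightarrow> real \<Rightarrow> real \<Rightarrow> real \<Rightarrow> bool" where
  "supercritical \<delta> \<gamma> k \<tau>0 s0 \<longleftrightarrow> fold_point \<delta> \<gamma> k \<tau>0 s0 \<and>
     (\<exists>U. open U \<and> (\<tau>0, s0) \<in> U \<and> (\<forall>(t, s)\<in>U. \<bar>s - s0\<bar> < pi) \<and>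
        (\<exists>\<eta>>0. (\<forall>\<tau>. \<tau>0 < \<tau> \<and> \<tau> < \<tau>0 + \<eta> \<longrightarrow> card (local_zeros \<delta> \<gamma> k U \<tau>) = 2) \<and>
               card (local_zeros \<delta> \<gamma> k U \<tau>0) = 1 \<and>
               (\<forall>\<tau>. \<tau>0 - \<eta> < \<tau> \<and> \<tau> < \<tau>0 \<longrightarrow> local_zeros \<delta> \<gamma> k U \<tau> = {})))"

definition subcritical :: "real \<Rightarrow> real \<Rightarrow> real \<Rightarrow> real \<Rightarrow> real \<Rightarrow> bool" where
  "subcritical \<delta> \<gamma> k \<tau>0 s0 \<longleftrightarrow> fold_point \<delta> \<gamma> k \<tau>0 s0 \<and>
     (\<exists>U. open U \<and> (\<tau>0, s0) \<in> U \<and> (\<forall>(t, s)\<in>U. \<bar>s - s0\<bar> < pi) \<and>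
        (\<exists>\<eta>>0. (\<forall>\<tau>. \<tau>0 - \<eta> < \<tau> \<and> \<tau> < \<tau>0 \<longrightarrow> card (local_zeros \<delta> \<gamma> k U \<tau>) = 2) \<and>
               card (local_zeros \<delta> \<gamma> k U \<tau>0) = 1 \<and>
               (\<forall>\<tau>. \<tau>0 < \<tau> \<and> \<tau> < \<tau>0 + \<eta> \<longrightarrow> local_zeros \<delta> \<gamma> k U \<tau> = {})))"

definition conv_to_3pi2 :: "real \<Rightarrow> real \<Rightarrow> real \<Rightarrow> bool" where
  "conv_to_3pi2 \<delta> \<gamma> k \<longleftrightarrow>
     (\<forall>\<epsilon>>0. \<exists>\<eta>>0. \<forall>\<tau> s. 0 < \<tau> \<and> \<tau> < \<eta> \<and> s \<in> fibre \<delta> \<gamma> k \<tau> \<longrightarrow> \<bar>s - 3*pi/2\<bar> < \<epsilon>)"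

end

theory Submission
  imports Defs
begin



lemma sin_char:
  fixes c s :: real
  assumes "-1 \<le> c" "c \<le> 1" "-pi/2 \<le> s" "s \<le> 3*pi/2"
  shows "sin s = c \<longleftrightarrow> s = arcsin c \<or> s = pi - arcsin c"
proof
  assume h: "sin s = c"
  show "s = arcsin c \<or> s = pi - arcsin c"
  proof (cases "s \<le> pi/2")
    case True
    then have "arcsin (sin s) = s" using assms by (intro arcsin_sin) auto
    then show ?thesis using h by auto
  next
    case False
    then have "arcsin (sin (pi - s)) = pi - s" using assms by (intro arcsin_sin) auto
    then show ?thesis using h by auto
  qed
next
  assume "s = arcsin c \<or> s = pi - arcsin c"
  then show "sin s = c" using assms by auto
qed

lemma sin_set_02pi:
  fixes c :: real
  assumes "-1 \<le> c" "c \<le> 1"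
  shows "{s\<in>{0..<2*pi}. sin s = c} = {x \<in> {arcsin c, pi - arcsin c, arcsin c + 2*pi}. 0 \<le> x \<and> x < 2*pi}"
proof (intro set_eqI iffI)
  fix s assume "s \<in> {s\<in>{0..<2*pi}. sin s = c}"
  then have s: "0 \<le> s" "s < 2*pi" "sin s = c" by auto
  show "s \<in> {x \<in> {arcsin c, pi - arcsin c, arcsin c + 2*pi}. 0 \<le> x \<and> x < 2*pi}"
  proof (cases "s \<le> 3*pi/2")
    case True
    then show ?thesis using sin_char[OF assms, of s] s by auto
  next
    case False
    have "sin (s - 2*pi) = c" using s by (simp add: sin_diff)
    then have "s - 2*pi = arcsin c \<or> s - 2*pi = pi - arcsin c"
      using sin_char[OF assms, of "s - 2*pi"] s False by auto
    moreover have "s - 2*pi \<noteq> pi - arcsin c" using arcsin_bounded[OF assms] s by auto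
    ultimately show ?thesis using s by auto
  qed
next
  fix s assume "s \<in> {x \<in> {arcsin c, pi - arcsin c, arcsin c + 2*pi}. 0 \<le> x \<and> x < 2*pi}"
  then show "s \<in> {s\<in>{0..<2*pi}. sin s = c}" using assms by (auto simp: sin_add)
qed

lemma card_sin_02pi:
  fixes c :: real
  assumes "-1 < c" "c < 1"
  shows "card {s\<in>{0..<2*pi}. sin s = c} = 2"
proof -
  have b: "-(pi/2) < arcsin c" "arcsin c < pi/2" using arcsin_lt_bounded[OF assms] by auto
  show ?thesis
  proof (cases "0 \<le> c")
    case True
    then have "0 \<le> arcsin c" using arcsin_le_arcsin[of 0 c] assms by auto
    then have "{x \<in> {arcsin c, pi - arcsin c, arcsin c + 2*pi}. 0 \<le> x \<and> x < 2*pi} = {arcsin c, pi - arcsin c}"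
      using b pi_gt_zero by auto
    then show ?thesis using sin_set_02pi[of c] assms b by auto
  next
    case False
    then have "arcsin c < 0" using arcsin_less_arcsin[of c 0] assms by auto
    then have "{x \<in> {arcsin c, pi - arcsin c, arcsin c + 2*pi}. 0 \<le> x \<and> x < 2*pi} = {pi - arcsin c, arcsin c + 2*pi}"
      using b pi_gt_zero by auto
    then show ?thesis using sin_set_02pi[of c] assms b by auto
  qed
qed

lemma sin_02pi_m1: "{s\<in>{0..<2*pi}. sin s = -1} = {3*pi/2}"
proof -
  have "{x \<in> {arcsin (-1), pi - arcsin (-1), arcsin (-1) + 2*pi}. 0 \<le> x \<and> x < (2*pi::real)}
      = {x \<in> {-(pi/2), 3*pi/2}. 0 \<le> x \<and> x < 2*pi}"
    by (simp only: arcsin_minus_1) (auto simp: algebra_simps)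
  also have "\<dots> = {3*pi/2}"
  proof (intro set_eqI iffI)
    fix x assume "x \<in> {x \<in> {-(pi/2), 3*pi/2}. 0 \<le> x \<and> x < 2*pi}"
    then show "x \<in> {3*pi/2}" using pi_gt_zero by auto
  next
    fix x assume "x \<in> {3*pi/2::real}"
    then have x: "x = 3*pi/2" by (simp only: singleton_iff)
    have h: "0 \<le> 3*pi/2" "3*pi/2 < 2*pi" using pi_gt_zero by linarith+
    show "x \<in> {x \<in> {-(pi/2), 3*pi/2}. 0 \<le> x \<and> x < 2*pi}" unfolding x using h by blast
  qed
  finally show ?thesis using sin_set_02pi[of "-1"] by simp
qed
lemma sin_02pi_1: "{s\<in>{0..<2*pi}. sin s = 1} = {pi/2}"
proof -
  have "{x \<in> {arcsin 1, pi - arcsin 1, arcsin 1 + 2*pi}. 0 \<le> x \<and> x < (2*pi::real)}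
      = {x \<in> {pi/2, 5*pi/2}. 0 \<le> x \<and> x < 2*pi}"
    by (simp only: arcsin_1) (auto simp: algebra_simps)
  also have "\<dots> = {pi/2}"
  proof (intro set_eqI iffI)
    fix x assume "x \<in> {x \<in> {pi/2, 5*pi/2}. 0 \<le> x \<and> x < 2*pi}"
    then show "x \<in> {pi/2}" using pi_gt_zero by auto
  next
    fix x assume "x \<in> {pi/2::real}"
    then have x: "x = pi/2" by (simp only: singleton_iff)
    have h: "0 \<le> pi/2" "pi/2 < 2*pi" using pi_gt_zero by linarith+
    show "x \<in> {x \<in> {pi/2, 5*pi/2}. 0 \<le> x \<and> x < 2*pi}" unfolding x using h by blast
  qed
  finally show ?thesis using sin_set_02pi[of "1"] by simp
qed

lemma sin_02pi_gt: "c > 1 \<Longrightarrow> {s\<in>{0..<2*pi}. sin s = (c::real)} = {}"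
  using sin_le_one by (auto) (metis sin_le_one not_le)

lemma sin_loc:
  fixes c :: real
  assumes "-1 \<le> c" "c \<le> 1"
  shows "{s. \<bar>s - pi/2\<bar> < pi \<and> sin s = c} = {x \<in> {arcsin c, pi - arcsin c}. \<bar>x - pi/2\<bar> < pi}"
proof (intro set_eqI iffI)
  fix s assume "s \<in> {s. \<bar>s - pi/2\<bar> < pi \<and> sin s = c}"
  then show "s \<in> {x \<in> {arcsin c, pi - arcsin c}. \<bar>x - pi/2\<bar> < pi}"
    using sin_char[OF assms, of s] by auto
next
  fix s assume "s \<in> {x \<in> {arcsin c, pi - arcsin c}. \<bar>x - pi/2\<bar> < pi}"
  then show "s \<in> {s. \<bar>s - pi/2\<bar> < pi \<and> sin s = c}" using assms by auto
qed

lemma card_sin_loc: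
  fixes c :: real
  assumes "-1 < c" "c < 1"
  shows "card {s. \<bar>s - pi/2\<bar> < pi \<and> sin s = c} = 2"
proof -
  have b: "-(pi/2) < arcsin c" "arcsin c < pi/2" using arcsin_lt_bounded[OF assms] by auto
  then have "{x \<in> {arcsin c, pi - arcsin c}. \<bar>x - pi/2\<bar> < pi} = {arcsin c, pi - arcsin c}"
    by auto
  then show ?thesis using sin_loc[of c] assms b by auto
qed

lemma sin_loc_1: "{s. \<bar>s - pi/2\<bar> < pi \<and> sin s = 1} = {pi/2}"
proof -
  have "{x \<in> {arcsin 1, pi - arcsin 1}. \<bar>x - pi/2\<bar> < pi} = {x \<in> {pi/2}. \<bar>x - pi/2\<bar> < pi}"
    by (simp only: arcsin_1) (auto simp: algebra_simps)
  also have "\<dots> = {pi/2}" using pi_gt_zero by auto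
  finally show ?thesis using sin_loc[of 1] by simp
qed

lemma sin_loc_gt: "c > 1 \<Longrightarrow> {s. \<bar>s - pi/2\<bar> < pi \<and> sin s = (c::real)} = {}"
  by (auto) (metis sin_le_one not_le)




lemma g_iff:
  assumes "0 < \<tau>" "\<gamma> > 0"
  shows "g_fun \<delta> \<gamma> 1 \<tau> s = 0 \<longleftrightarrow> sin s = F_fun \<delta> \<tau> / \<gamma> - 1"
proof -
  define e where "e = \<delta>^2 - \<delta>"
  have e1: "\<tau> powr (\<delta>^2) = \<tau> powr e * \<tau> powr \<delta>" unfolding e_def by (simp add: powr_add[symmetric])
  have e2: "\<tau> = \<tau> powr e * \<tau> powr (p_exp \<delta>)"
    unfolding e_def p_exp_def using assms by (simp add: powr_add[symmetric])
  have pos: "\<tau> powr e > 0" using assms by simp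
  have "g_fun \<delta> \<gamma> 1 \<tau> s = \<tau> powr e * (\<tau> powr \<delta> + \<gamma> * (1 + sin s) - \<tau> powr (p_exp \<delta>))"
    unfolding g_fun_def e_def[symmetric] by (subst e1, subst (3) e2) (simp add: algebra_simps)
  then have "g_fun \<delta> \<gamma> 1 \<tau> s = 0 \<longleftrightarrow> \<gamma> * (1 + sin s) = F_fun \<delta> \<tau>"
    using pos unfolding F_fun_def by auto
  also have "\<dots> \<longleftrightarrow> sin s = F_fun \<delta> \<tau> / \<gamma> - 1"
    using assms by (auto simp: field_simps)
  finally show ?thesis .
qed

lemma fibre_eq:
  assumes "0 < \<tau>" "\<tau> \<le> 1" "\<gamma> > 0"
  shows "fibre \<delta> \<gamma> 1 \<tau> = {s\<in>{0..<2*pi}. sin s = F_fun \<delta> \<tau> / \<gamma> - 1}"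
  unfolding fibre_def using g_iff[OF assms(1,3)] assms by auto

lemma fibre_out: "\<not> (0 < \<tau> \<and> \<tau> \<le> 1) \<Longrightarrow> fibre \<delta> \<gamma> 1 \<tau> = {}"
  unfolding fibre_def by auto

definition U0 :: "(real \<times> real) set" where "U0 = {z. \<bar>snd z - pi/2\<bar> < pi}"

lemma U0_open: "open U0"
  unfolding U0_def by (intro open_Collect_less continuous_intros)

lemma U0_in: "(t, pi/2) \<in> U0" unfolding U0_def by simp

lemma U0_width: "\<forall>(t, s)\<in>U0. \<bar>s - pi/2\<bar> < pi" unfolding U0_def by auto

lemma lz_eq:
  assumes "0 < \<tau>" "\<tau> \<le> 1" "\<gamma> > 0"
  shows "local_zeros \<delta> \<gamma> 1 U0 \<tau> = {s. \<bar>s - pi/2\<bar> < pi \<and> sin s = F_fun \<delta> \<tau> / \<gamma> - 1}"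
  unfolding local_zeros_def U0_def using g_iff[OF assms(1,3)] assms by auto

lemma fibre_card2:
  assumes "0 < \<tau>" "\<tau> \<le> 1" "\<gamma> > 0" "0 < F_fun \<delta> \<tau>" "F_fun \<delta> \<tau> < 2*\<gamma>"
  shows "card (fibre \<delta> \<gamma> 1 \<tau>) = 2"
proof -
  have "-1 < F_fun \<delta> \<tau> / \<gamma> - 1" "F_fun \<delta> \<tau> / \<gamma> - 1 < 1"
    using assms by (auto simp: field_simps)
  then show ?thesis using fibre_eq[OF assms(1-3)] card_sin_02pi by simp
qed

lemma fibre_top:
  assumes "0 < \<tau>" "\<tau> \<le> 1" "\<gamma> > 0" "F_fun \<delta> \<tau> = 2*\<gamma>"
  shows "fibre \<delta> \<gamma> 1 \<tau> = {pi/2}"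
proof -
  have "F_fun \<delta> \<tau> / \<gamma> - 1 = 1" using assms by simp
  then show ?thesis using fibre_eq[OF assms(1-3)] sin_02pi_1 by simp
qed

lemma fibre_empty:
  assumes "0 < \<tau>" "\<tau> \<le> 1" "\<gamma> > 0" "F_fun \<delta> \<tau> > 2*\<gamma>"
  shows "fibre \<delta> \<gamma> 1 \<tau> = {}"
proof -
  have "F_fun \<delta> \<tau> / \<gamma> - 1 > 1" using assms by (simp add: field_simps)
  then show ?thesis using fibre_eq[OF assms(1-3)] sin_02pi_gt by simp
qed

lemma F_one: "F_fun \<delta> 1 = 0" unfolding F_fun_def by simp

lemma fibre_one:
  assumes "\<gamma> > 0"
  shows "fibre \<delta> \<gamma> 1 1 = {3*pi/2}"
proof -
  have "F_fun \<delta> 1 / \<gamma> - 1 = -1" by (simp add: F_one)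
  then show ?thesis using fibre_eq[of 1 \<gamma> \<delta>] assms sin_02pi_m1 by simp
qed

lemma lz_card2:
  assumes "0 < \<tau>" "\<tau> \<le> 1" "\<gamma> > 0" "0 < F_fun \<delta> \<tau>" "F_fun \<delta> \<tau> < 2*\<gamma>"
  shows "card (local_zeros \<delta> \<gamma> 1 U0 \<tau>) = 2"
proof -
  have "-1 < F_fun \<delta> \<tau> / \<gamma> - 1" "F_fun \<delta> \<tau> / \<gamma> - 1 < 1"
    using assms by (auto simp: field_simps)
  then show ?thesis using lz_eq[OF assms(1-3)] card_sin_loc by simp
qed

lemma lz_top:
  assumes "0 < \<tau>" "\<tau> \<le> 1" "\<gamma> > 0" "F_fun \<delta> \<tau> = 2*\<gamma>"
  shows "card (local_zeros \<delta> \<gamma> 1 U0 \<tau>) = 1"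
proof -
  have "F_fun \<delta> \<tau> / \<gamma> - 1 = 1" using assms by simp
  then show ?thesis using lz_eq[OF assms(1-3)] sin_loc_1 by simp
qed

lemma lz_empty:
  assumes "0 < \<tau>" "\<tau> \<le> 1" "\<gamma> > 0" "F_fun \<delta> \<tau> > 2*\<gamma>"
  shows "local_zeros \<delta> \<gamma> 1 U0 \<tau> = {}"
proof -
  have "F_fun \<delta> \<tau> / \<gamma> - 1 > 1" using assms by (simp add: field_simps)
  then show ?thesis using lz_eq[OF assms(1-3)] sin_loc_gt by simp
qed

lemma fold_pt:
  assumes "0 < \<tau>" "\<tau> \<le> 1" "g_fun \<delta> \<gamma> k \<tau> s0 = 0" "cos s0 = 0"
  shows "fold_point \<delta> \<gamma> k \<tau> s0"
proof -
  have "((\<lambda>s. g_fun \<delta> \<gamma> k \<tau> s) has_real_derivative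
          (\<gamma> * \<tau> powr (\<delta>^2 - \<delta>) * (k * cos s0))) (at s0)"
    unfolding g_fun_def by (auto intro!: derivative_eq_intros)
  then have "deriv (\<lambda>s. g_fun \<delta> \<gamma> k \<tau> s) s0 = 0"
    using assms(4) by (simp add: DERIV_imp_deriv)
  then show ?thesis unfolding fold_point_def using assms by auto
qed

lemma super_gen:
  assumes "0 < t0" "t0 < 1" "\<gamma> > 0" "F_fun \<delta> t0 = 2*\<gamma>" "\<eta> > 0" "\<eta> \<le> t0" "t0 + \<eta> \<le> 1"
    and up: "\<And>\<tau>. t0 < \<tau> \<Longrightarrow> \<tau> < t0 + \<eta> \<Longrightarrow> 0 < F_fun \<delta> \<tau> \<and> F_fun \<delta> \<tau> < 2*\<gamma>"
    and dn: "\<And>\<tau>. t0 - \<eta> < \<tau> \<Longrightarrow> \<tau> < t0 \<Longrightarrow> F_fun \<delta> \<tau> > 2*\<gamma>"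
  shows "supercritical \<delta> \<gamma> 1 t0 (pi/2)"
proof -
  have fp: "fold_point \<delta> \<gamma> 1 t0 (pi/2)"
    using assms g_iff[of t0 \<gamma> \<delta> "pi/2"] by (intro fold_pt) auto
  have r1: "\<forall>\<tau>. t0 < \<tau> \<and> \<tau> < t0 + \<eta> \<longrightarrow> card (local_zeros \<delta> \<gamma> 1 U0 \<tau>) = 2"
  proof (intro allI impI)
    fix \<tau> assume h: "t0 < \<tau> \<and> \<tau> < t0 + \<eta>"
    show "card (local_zeros \<delta> \<gamma> 1 U0 \<tau>) = 2"
      using up[of \<tau>] h assms(1-7) by (intro lz_card2) auto
  qed
  have r2: "card (local_zeros \<delta> \<gamma> 1 U0 t0) = 1"
    using assms(1-4) by (intro lz_top) auto
  have r3: "\<forall>\<tau>. t0 - \<eta> < \<tau> \<and> \<tau> < t0 \<longrightarrow> local_zeros \<delta> \<gamma> 1 U0 \<tau> = {}"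
  proof (intro allI impI)
    fix \<tau> assume h: "t0 - \<eta> < \<tau> \<and> \<tau> < t0"
    show "local_zeros \<delta> \<gamma> 1 U0 \<tau> = {}"
      using dn[of \<tau>] h assms(1-7) by (intro lz_empty) auto
  qed
  show ?thesis unfolding supercritical_def
    using fp U0_open U0_in U0_width assms(5) r1 r2 r3 by blast
qed

lemma sub_gen:
  assumes "0 < t0" "t0 < 1" "\<gamma> > 0" "F_fun \<delta> t0 = 2*\<gamma>" "\<eta> > 0" "\<eta> \<le> t0" "t0 + \<eta> \<le> 1"
    and dn: "\<And>\<tau>. t0 - \<eta> < \<tau> \<Longrightarrow> \<tau> < t0 \<Longrightarrow> 0 < F_fun \<delta> \<tau> \<and> F_fun \<delta> \<tau> < 2*\<gamma>"
    and up: "\<And>\<tau>. t0 < \<tau> \<Longrightarrow> \<tau> < t0 + \<eta> \<Longrightarrow> F_fun \<delta> \<tau> > 2*\<gamma>"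
  shows "subcritical \<delta> \<gamma> 1 t0 (pi/2)"
proof -
  have fp: "fold_point \<delta> \<gamma> 1 t0 (pi/2)"
    using assms g_iff[of t0 \<gamma> \<delta> "pi/2"] by (intro fold_pt) auto
  have r1: "\<forall>\<tau>. t0 - \<eta> < \<tau> \<and> \<tau> < t0 \<longrightarrow> card (local_zeros \<delta> \<gamma> 1 U0 \<tau>) = 2"
  proof (intro allI impI)
    fix \<tau> assume h: "t0 - \<eta> < \<tau> \<and> \<tau> < t0"
    show "card (local_zeros \<delta> \<gamma> 1 U0 \<tau>) = 2"
      using dn[of \<tau>] h assms(1-7) by (intro lz_card2) auto
  qed
  have r2: "card (local_zeros \<delta> \<gamma> 1 U0 t0) = 1"
    using assms(1-4) by (intro lz_top) auto
  have r3: "\<forall>\<tau>. t0 < \<tau> \<and> \<tau> < t0 + \<eta> \<longrightarrow> local_zeros \<delta> \<gamma> 1 U0 \<tau> = {}"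
  proof (intro allI impI)
    fix \<tau> assume h: "t0 < \<tau> \<and> \<tau> < t0 + \<eta>"
    show "local_zeros \<delta> \<gamma> 1 U0 \<tau> = {}"
      using up[of \<tau>] h assms(1-7) by (intro lz_empty) auto
  qed
  show ?thesis unfolding subcritical_def
    using fp U0_open U0_in U0_width assms(5) r1 r2 r3 by blast
qed




lemma p_factor: "p_exp \<delta> = (Phi - \<delta>) * (\<delta> - (1 - sqrt 5)/2)"
proof -
  have h: "sqrt 5 * sqrt 5 = (5::real)" by simp
  show ?thesis unfolding p_exp_def Phi_def
    by (simp add: field_simps power2_eq_square h)
qed

lemma p_pos_iff: assumes "\<delta> > 1" shows "p_exp \<delta> > 0 \<longleftrightarrow> \<delta> < Phi"
proof -
  have s5: "sqrt 5 > 0" by simp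
  have "1 - sqrt 5 < \<delta>*2" using s5 assms by linarith
  then have "\<delta> - (1 - sqrt 5)/2 > 0" by (simp add: field_simps)
  then show ?thesis unfolding p_factor by (simp add: zero_less_mult_iff)
qed

lemma p_neg_iff: assumes "\<delta> > 1" shows "p_exp \<delta> < 0 \<longleftrightarrow> \<delta> > Phi"
proof -
  have s5: "sqrt 5 > 0" by simp
  have "1 - sqrt 5 < \<delta>*2" using s5 assms by linarith
  then have "\<delta> - (1 - sqrt 5)/2 > 0" by (simp add: field_simps)
  then show ?thesis unfolding p_factor by (simp add: mult_less_0_iff)
qed

lemma F_pos: assumes "\<delta> > 1" "0 < \<tau>" "\<tau> < 1" shows "F_fun \<delta> \<tau> > 0"
proof -
  have "1 < \<delta> * \<delta>" using assms(1) by (metis less_1_mult)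
  then have "p_exp \<delta> < \<delta>" unfolding p_exp_def by (simp add: power2_eq_square)
  then have "\<tau> powr \<delta> < \<tau> powr (p_exp \<delta>)" using assms by (intro powr_less_mono') auto
  then show ?thesis unfolding F_fun_def by simp
qed

lemma F_le: "F_fun \<delta> \<tau> \<le> \<tau> powr (p_exp \<delta>)"
  unfolding F_fun_def by simp

lemma F_cont: assumes "0 < a" shows "continuous_on {a..b} (F_fun \<delta>)"
  unfolding F_fun_def using assms by (intro continuous_intros) auto

lemma sin_3pi2: "sin (3*pi/2) = -1"
proof -
  have "3*pi/2 \<in> {s\<in>{0..<2*pi}. sin s = -1}" unfolding sin_02pi_m1 by simp
  then show ?thesis by blast
qed

lemma cos_3pi2: "cos (3*pi/2) = 0"
  using sin_cos_squared_add[of "3*pi/2"] sin_3pi2 by simp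

lemma conv_lemma:
  assumes "p_exp \<delta> > 0" "\<gamma> > 0"
  shows "conv_to_3pi2 \<delta> \<gamma> 1"
  unfolding conv_to_3pi2_def
proof (intro allI impI)
  fix \<epsilon> :: real assume "\<epsilon> > 0"
  define e where "e = min \<epsilon> (pi/2)"
  have e: "0 < e" "e \<le> \<epsilon>" "e \<le> pi/2" unfolding e_def using \<open>\<epsilon>>0\<close> pi_gt_zero by auto
  have ce: "cos e < 1" using cos_monotone_0_pi[of 0 e] e pi_gt_zero by simp
  have ce0: "0 \<le> cos e" using e by (intro cos_ge_zero) auto
  define K where "K = \<gamma> * (1 - cos e)"
  have K: "K > 0" unfolding K_def using ce assms by simp
  define \<eta> where "\<eta> = min 1 (K powr (1 / p_exp \<delta>))"
  have \<eta>: "\<eta> > 0" "\<eta> \<le> 1" unfolding \<eta>_def using K by auto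
  have \<eta>p: "\<eta> powr p_exp \<delta> \<le> K"
  proof -
    have "\<eta> powr p_exp \<delta> \<le> (K powr (1 / p_exp \<delta>)) powr p_exp \<delta>"
      unfolding \<eta>_def using assms K by (intro powr_mono2) auto
    also have "\<dots> = K" using assms K by (simp add: powr_powr)
    finally show ?thesis .
  qed
  show "\<exists>\<eta>>0. \<forall>\<tau> s. 0 < \<tau> \<and> \<tau> < \<eta> \<and> s \<in> fibre \<delta> \<gamma> 1 \<tau> \<longrightarrow> \<bar>s - 3 * pi / 2\<bar> < \<epsilon>"
  proof (intro exI[of _ \<eta>] conjI allI impI)
    show "\<eta> > 0" by fact
    fix \<tau> s assume h: "0 < \<tau> \<and> \<tau> < \<eta> \<and> s \<in> fibre \<delta> \<gamma> 1 \<tau>"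
    then have s: "0 \<le> s" "s < 2*pi" "sin s = F_fun \<delta> \<tau> / \<gamma> - 1"
      using fibre_eq[of \<tau> \<gamma> \<delta>] \<eta> assms by auto
    have "\<tau> powr p_exp \<delta> < \<eta> powr p_exp \<delta>" using h assms by (intro powr_less_mono2) auto
    then have "F_fun \<delta> \<tau> < K" using F_le[of \<delta> \<tau>] \<eta>p by linarith
    moreover have "F_fun \<delta> \<tau> = \<gamma> * (1 + sin s)" using s(3) assms by (simp add: field_simps)
    ultimately have "\<gamma> * (1 + sin s) < \<gamma> * (1 - cos e)" unfolding K_def by simp
    then have lt: "1 + sin s < 1 - cos e" using assms(2) by simp
    define t where "t = s - 3*pi/2"
    have st: "sin s = - cos t"
      unfolding t_def by (simp add: cos_diff sin_3pi2 cos_3pi2)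
    have "\<bar>t\<bar> < e"
    proof (rule ccontr)
      assume "\<not> \<bar>t\<bar> < e"
      then have te: "e \<le> \<bar>t\<bar>" by simp
      have "cos t \<le> cos e"
      proof (cases "\<bar>t\<bar> \<le> pi")
        case True
        then have "cos \<bar>t\<bar> \<le> cos e" using e by (intro cos_monotone_0_pi_le) (use te in auto)
        then show ?thesis by simp
      next
        case False
        then have "t < -pi" "-3*pi/2 \<le> t" unfolding t_def using s pi_gt_zero by auto
        then have "0 \<le> cos (t + pi)" by (intro cos_ge_zero) auto
        then have "cos t \<le> 0" by simp
        then show ?thesis using ce0 by simp
      qed
      then show False using lt st by simp
    qed
    then show "\<bar>s - 3 * pi / 2\<bar> < \<epsilon>" unfolding t_def using e by simp
  qed
qed

lemma F_bdd: assumes "p_exp \<delta> > 0" shows "bdd_above (F_fun \<delta> ` {0<..1})"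
proof (rule bdd_aboveI2)
  fix \<tau> :: real assume "\<tau> \<in> {0<..1}"
  then have "\<tau> powr p_exp \<delta> \<le> 1 powr p_exp \<delta>" using assms by (intro powr_mono2) auto
  then show "F_fun \<delta> \<tau> \<le> 1" using F_le[of \<delta> \<tau>] by simp
qed




lemma F_deriv:
  assumes "x > 0"
  shows "(F_fun \<delta> has_real_derivative
           (p_exp \<delta> * x powr (p_exp \<delta> - 1) - \<delta> * x powr (\<delta> - 1))) (at x)"
proof -
  have "((\<lambda>x. x powr p_exp \<delta> - x powr \<delta>) has_real_derivative
           (p_exp \<delta> * x powr (p_exp \<delta> - 1) - \<delta> * x powr (\<delta> - 1))) (at x)"
    using assms by (intro DERIV_diff has_real_derivative_powr) auto
  then show ?thesis unfolding F_fun_def[abs_def] by simp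
qed

locale Fpos =
  fixes \<delta> :: real
  assumes d1: "\<delta> > 1" and pp: "p_exp \<delta> > 0"
begin

definition q where "q = \<delta> - p_exp \<delta>"
definition ts where "ts = (p_exp \<delta> / \<delta>) powr (1 / q)"

lemma q_pos: "q > 0"
proof -
  have "1 < \<delta> * \<delta>" using d1 by (metis less_1_mult)
  then show ?thesis unfolding q_def p_exp_def by (simp add: power2_eq_square)
qed

lemma pd: "0 < p_exp \<delta> / \<delta>" "p_exp \<delta> / \<delta> < 1"
  using pp d1 q_pos unfolding q_def by (auto simp: field_simps)

lemma ts_pos: "ts > 0" unfolding ts_def using pd pp d1 by simp

lemma ts_lt1: "ts < 1"
proof -
  have "(p_exp \<delta> / \<delta>) powr (1/q) < 1 powr (1/q)"
    using pd q_pos by (intro powr_less_mono2) auto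
  then show ?thesis unfolding ts_def by simp
qed

lemma ts_q: "ts powr q = p_exp \<delta> / \<delta>"
  unfolding ts_def using pd q_pos pp d1 by (simp add: powr_powr)

lemma deriv_fact:
  assumes "x > 0"
  shows "p_exp \<delta> * x powr (p_exp \<delta> - 1) - \<delta> * x powr (\<delta> - 1)
           = x powr (p_exp \<delta> - 1) * (p_exp \<delta> - \<delta> * x powr q)"
proof -
  have "x powr (\<delta> - 1) = x powr (p_exp \<delta> - 1) * x powr q"
    unfolding q_def using assms by (simp add: powr_add[symmetric])
  then show ?thesis by (simp add: algebra_simps)
qed

lemma deriv_pos:
  assumes "0 < x" "x < ts"
  shows "p_exp \<delta> * x powr (p_exp \<delta> - 1) - \<delta> * x powr (\<delta> - 1) > 0"
proof -
  have "x powr q < ts powr q" using assms q_pos by (intro powr_less_mono2) auto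
  then have "\<delta> * x powr q < p_exp \<delta>" using ts_q d1 by (simp add: field_simps)
  then show ?thesis using deriv_fact[OF assms(1)] assms by simp
qed

lemma deriv_neg:
  assumes "ts < x"
  shows "p_exp \<delta> * x powr (p_exp \<delta> - 1) - \<delta> * x powr (\<delta> - 1) < 0"
proof -
  have x0: "x > 0" using assms ts_pos by simp
  have "ts powr q < x powr q" using assms q_pos ts_pos by (intro powr_less_mono2) auto
  then have "\<delta> * x powr q > p_exp \<delta>" using ts_q d1 by (simp add: field_simps)
  then show ?thesis using deriv_fact[OF x0] x0 by (simp add: mult_pos_neg)
qed

lemma inc:
  assumes "0 < x" "x < y" "y \<le> ts"
  shows "F_fun \<delta> x < F_fun \<delta> y"
proof (rule DERIV_pos_imp_increasing_open[OF assms(2)])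
  fix z assume "x < z" "z < y"
  then show "\<exists>y. DERIV (F_fun \<delta>) z :> y \<and> y > 0"
    using assms F_deriv[of z \<delta>] deriv_pos[of z] by auto
next
  show "continuous_on {x..y} (F_fun \<delta>)" using F_cont assms by simp
qed

lemma dec:
  assumes "ts \<le> x" "x < y"
  shows "F_fun \<delta> x > F_fun \<delta> y"
proof (rule DERIV_neg_imp_decreasing_open[OF assms(2)])
  fix z assume "x < z" "z < y"
  then show "\<exists>y. DERIV (F_fun \<delta>) z :> y \<and> y < 0"
    using assms ts_pos F_deriv[of z \<delta>] deriv_neg[of z] by auto
next
  show "continuous_on {x..y} (F_fun \<delta>)" using F_cont assms ts_pos by simp
qed

lemma max_ts: assumes "0 < x" shows "F_fun \<delta> x \<le> F_fun \<delta> ts"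
proof -
  consider "x < ts" | "x = ts" | "ts < x" by linarith
  then show ?thesis
  proof cases
    case 1 then show ?thesis using inc[of x ts] assms by simp
  next
    case 2 then show ?thesis by simp
  next
    case 3 then show ?thesis using dec[of ts x] by simp
  qed
qed

end




lemma part_a:
  assumes "\<gamma> > 0" "\<delta> > 1" "\<delta> < Phi" "\<gamma> > M_F \<delta> / 2"
  shows "(\<forall>\<tau>. 0 < \<tau> \<and> \<tau> < 1 \<longrightarrow> card (fibre \<delta> \<gamma> 1 \<tau>) = 2) \<and>
       fibre \<delta> \<gamma> 1 1 = {3*pi/2} \<and> conv_to_3pi2 \<delta> \<gamma> 1"
proof (intro conjI allI impI)
  have pp: "p_exp \<delta> > 0" using p_pos_iff assms by simp
  fix \<tau> :: real assume t: "0 < \<tau> \<and> \<tau> < 1"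
  have "F_fun \<delta> \<tau> \<le> M_F \<delta>" unfolding M_F_def
    using t F_bdd[OF pp] by (intro cSUP_upper) auto
  then show "card (fibre \<delta> \<gamma> 1 \<tau>) = 2"
    using t assms F_pos[of \<delta> \<tau>] by (intro fibre_card2) auto
next
  show "fibre \<delta> \<gamma> 1 1 = {3*pi/2}" using fibre_one assms by simp
next
  show "conv_to_3pi2 \<delta> \<gamma> 1" using conv_lemma p_pos_iff assms by simp
qed

lemma part_b:
  assumes "\<gamma> > 0" "\<delta> > 1" "\<delta> < Phi" "\<gamma> < M_F \<delta> / 2"
  shows "\<exists>a b. 0 < a \<and> a < b \<and> b < 1 \<and>
          (\<forall>\<tau>. (0 < \<tau> \<and> \<tau> < a) \<or> (b < \<tau> \<and> \<tau> < 1) \<longrightarrow> card (fibre \<delta> \<gamma> 1 \<tau>) = 2) \<and>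
          fibre \<delta> \<gamma> 1 a = {pi/2} \<and> fibre \<delta> \<gamma> 1 b = {pi/2} \<and>
          (\<forall>\<tau>. a < \<tau> \<and> \<tau> < b \<longrightarrow> fibre \<delta> \<gamma> 1 \<tau> = {}) \<and>
          fibre \<delta> \<gamma> 1 1 = {3*pi/2} \<and>
          subcritical \<delta> \<gamma> 1 a (pi/2) \<and> supercritical \<delta> \<gamma> 1 b (pi/2) \<and>
          conv_to_3pi2 \<delta> \<gamma> 1"
proof -
  have pp: "p_exp \<delta> > 0" using p_pos_iff assms by simp
  interpret Fpos \<delta> using pp assms by unfold_locales auto
  have "2*\<gamma> < (SUP \<tau>\<in>{0<..1}. F_fun \<delta> \<tau>)" using assms unfolding M_F_def by simp
  then obtain t' where t': "t' \<in> {0<..1}" "2*\<gamma> < F_fun \<delta> t'"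
    using less_cSUP_iff[of "{0<..1::real}" "F_fun \<delta>" "2*\<gamma>"] F_bdd[OF pp] by auto
  have Fts: "2*\<gamma> < F_fun \<delta> ts" using max_ts[of t'] t' by simp
  define t1 where "t1 = min (ts/2) (\<gamma> powr (1 / p_exp \<delta>))"
  have t1: "0 < t1" "t1 < ts" unfolding t1_def using ts_pos assms by auto
  have "F_fun \<delta> t1 \<le> t1 powr p_exp \<delta>" by (rule F_le)
  also have "\<dots> \<le> (\<gamma> powr (1 / p_exp \<delta>)) powr p_exp \<delta>"
    unfolding t1_def using pp t1 by (intro powr_mono2) auto
  also have "\<dots> = \<gamma>" using pp assms by (simp add: powr_powr)
  finally have Ft1: "F_fun \<delta> t1 \<le> 2*\<gamma>" using assms by simp
  obtain a where a: "t1 \<le> a" "a \<le> ts" "F_fun \<delta> a = 2*\<gamma>"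
    using IVT'[of "F_fun \<delta>" t1 "2*\<gamma>" ts] Ft1 Fts t1 F_cont[of t1 ts \<delta>] by auto
  obtain b where b: "ts \<le> b" "b \<le> 1" "F_fun \<delta> b = 2*\<gamma>"
    using IVT2'[of "F_fun \<delta>" 1 "2*\<gamma>" ts] F_one[of \<delta>] Fts ts_lt1 ts_pos assms(1)
      F_cont[of ts 1 \<delta>] by auto
  have a0: "0 < a" "a < ts" using a t1 Fts by (auto simp: order.order_iff_strict)
  have b1: "ts < b" "b < 1" using b Fts F_one[of \<delta>] assms(1) by (auto simp: order.order_iff_strict)
  have lowA: "0 < F_fun \<delta> \<tau> \<and> F_fun \<delta> \<tau> < 2*\<gamma>" if "0 < \<tau>" "\<tau> < a" for \<tau>
    using inc[of \<tau> a] a a0 that F_pos[of \<delta> \<tau>] assms ts_lt1 by auto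
  have lowB: "0 < F_fun \<delta> \<tau> \<and> F_fun \<delta> \<tau> < 2*\<gamma>" if "b < \<tau>" "\<tau> < 1" for \<tau>
    using dec[of b \<tau>] b b1 that F_pos[of \<delta> \<tau>] assms ts_pos by auto
  have lowA1: "0 < F_fun \<delta> \<tau>" "F_fun \<delta> \<tau> < 2*\<gamma>" if "0 < \<tau>" "\<tau> < a" for \<tau>
    using lowA[OF that] by auto
  have lowB1: "0 < F_fun \<delta> \<tau>" "F_fun \<delta> \<tau> < 2*\<gamma>" if "b < \<tau>" "\<tau> < 1" for \<tau>
    using lowB[OF that] by auto
  have mid: "F_fun \<delta> \<tau> > 2*\<gamma>" if "a < \<tau>" "\<tau> < b" for \<tau>
  proof (cases "\<tau> \<le> ts")
    case True then show ?thesis using inc[of a \<tau>] a a0 that by auto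
  next
    case False then show ?thesis using dec[of \<tau> b] b that by auto
  qed
  show ?thesis
  proof (rule exI[of _ a], rule exI[of _ b], intro conjI allI impI)
    show "0 < a" "a < b" "b < 1" using a0 b1 by auto
  next
    fix \<tau> assume "(0 < \<tau> \<and> \<tau> < a) \<or> (b < \<tau> \<and> \<tau> < 1)"
    then show "card (fibre \<delta> \<gamma> 1 \<tau>) = 2"
    proof
      assume h: "0 < \<tau> \<and> \<tau> < a"
      then show ?thesis using lowA[of \<tau>] a0 ts_lt1 assms by (intro fibre_card2) auto
    next
      assume h: "b < \<tau> \<and> \<tau> < 1"
      then show ?thesis using lowB[of \<tau>] b1 ts_pos assms by (intro fibre_card2) auto
    qed
  next
    show "fibre \<delta> \<gamma> 1 a = {pi/2}" using a a0 ts_lt1 assms by (intro fibre_top) auto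
  next
    show "fibre \<delta> \<gamma> 1 b = {pi/2}" using b b1 ts_pos assms by (intro fibre_top) auto
  next
    fix \<tau> assume h: "a < \<tau> \<and> \<tau> < b"
    then show "fibre \<delta> \<gamma> 1 \<tau> = {}" using mid[of \<tau>] a0 b1 assms by (intro fibre_empty) auto
  next
    show "fibre \<delta> \<gamma> 1 1 = {3*pi/2}" using fibre_one assms by simp
  next
    have m: "min a (b-a) \<le> a" "min a (b-a) \<le> b - a" by auto
    show "subcritical \<delta> \<gamma> 1 a (pi/2)"
    proof (rule sub_gen[where \<eta> = "min a (b - a)"])
      fix \<tau> assume h: "a - min a (b - a) < \<tau>" "\<tau> < a"
      then show "0 < F_fun \<delta> \<tau> \<and> F_fun \<delta> \<tau> < 2*\<gamma>" using m by (intro lowA) auto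
    next
      fix \<tau> assume h: "a < \<tau>" "\<tau> < a + min a (b - a)"
      then show "F_fun \<delta> \<tau> > 2*\<gamma>" using m by (intro mid) auto
    qed (use a a0 b1 assms ts_lt1 m in auto)
  next
    have m: "min (b - a) (1 - b) \<le> b - a" "min (b - a) (1 - b) \<le> 1 - b" by auto
    show "supercritical \<delta> \<gamma> 1 b (pi/2)"
    proof (rule super_gen[where \<eta> = "min (b - a) (1 - b)"])
      fix \<tau> assume h: "b < \<tau>" "\<tau> < b + min (b - a) (1 - b)"
      then show "0 < F_fun \<delta> \<tau> \<and> F_fun \<delta> \<tau> < 2*\<gamma>" using m by (intro lowB) auto
    next
      fix \<tau> assume h: "b - min (b - a) (1 - b) < \<tau>" "\<tau> < b"
      then show "F_fun \<delta> \<tau> > 2*\<gamma>" using m by (intro mid) auto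
    qed (use b a0 b1 assms ts_pos m in auto)
  next
    show "conv_to_3pi2 \<delta> \<gamma> 1" using conv_lemma pp assms by simp
  qed
qed

lemma part_c:
  assumes "\<gamma> > 0" "\<delta> > 1" "\<delta> > Phi"
  shows "\<exists>\<tau>0. 0 < \<tau>0 \<and> \<tau>0 < 1 \<and>
          (\<forall>\<tau>. 0 < \<tau> \<and> \<tau> < \<tau>0 \<longrightarrow> fibre \<delta> \<gamma> 1 \<tau> = {}) \<and>
          fibre \<delta> \<gamma> 1 \<tau>0 = {pi/2} \<and>
          (\<forall>\<tau>. \<tau>0 < \<tau> \<and> \<tau> < 1 \<longrightarrow> card (fibre \<delta> \<gamma> 1 \<tau>) = 2) \<and>
          fibre \<delta> \<gamma> 1 1 = {3*pi/2} \<and>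
          supercritical \<delta> \<gamma> 1 \<tau>0 (pi/2) \<and> fold_point \<delta> \<gamma> 1 1 (3*pi/2)"
proof -
  have pn: "p_exp \<delta> < 0" using p_neg_iff assms by simp
  have decr: "F_fun \<delta> y < F_fun \<delta> x" if "0 < x" "x < y" for x y
  proof -
    have "y powr p_exp \<delta> < x powr p_exp \<delta>" using pn that by (intro powr_less_mono2_neg) auto
    moreover have "x powr \<delta> < y powr \<delta>" using assms that by (intro powr_less_mono2) auto
    ultimately show ?thesis unfolding F_fun_def by simp
  qed
  define t1 where "t1 = (2*\<gamma>+2) powr (1 / p_exp \<delta>)"
  have t1p: "0 < t1" unfolding t1_def using assms by simp
  have "(2*\<gamma>+2) powr (1 / p_exp \<delta>) < (2*\<gamma>+2) powr 0"
    using assms pn by (intro powr_less_mono) (auto simp: divide_neg_pos)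
  then have t11: "t1 < 1" unfolding t1_def using assms by simp
  have "t1 powr p_exp \<delta> = 2*\<gamma>+2" unfolding t1_def using assms pn by (simp add: powr_powr)
  moreover have "t1 powr \<delta> < 1 powr \<delta>" using t1p t11 assms by (intro powr_less_mono2) auto
  ultimately have Ft1: "F_fun \<delta> t1 > 2*\<gamma>" unfolding F_fun_def by simp
  obtain t0 where t0: "t1 \<le> t0" "t0 \<le> 1" "F_fun \<delta> t0 = 2*\<gamma>"
    using IVT2'[of "F_fun \<delta>" 1 "2*\<gamma>" t1] F_one[of \<delta>] Ft1 t11 assms(1)
      F_cont[OF t1p, of 1 \<delta>] by auto
  have t0p: "0 < t0" "t0 < 1" using t0 t1p F_one[of \<delta>] assms(1) by (auto simp: order.order_iff_strict)
  have hi: "0 < F_fun \<delta> \<tau> \<and> F_fun \<delta> \<tau> < 2*\<gamma>" if "t0 < \<tau>" "\<tau> < 1" for \<tau>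
    using decr[of t0 \<tau>] t0 t0p that F_pos[of \<delta> \<tau>] assms by auto
  have lo: "F_fun \<delta> \<tau> > 2*\<gamma>" if "0 < \<tau>" "\<tau> < t0" for \<tau>
    using decr[of \<tau> t0] t0 that by auto
  have hi1: "0 < F_fun \<delta> \<tau>" "F_fun \<delta> \<tau> < 2*\<gamma>" if "t0 < \<tau>" "\<tau> < 1" for \<tau>
    using hi[OF that] by auto
  show ?thesis
  proof (intro exI[of _ t0] conjI allI impI)
    show "0 < t0" "t0 < 1" using t0p by auto
  next
    fix \<tau> assume "0 < \<tau> \<and> \<tau> < t0"
    then show "fibre \<delta> \<gamma> 1 \<tau> = {}" using lo[of \<tau>] t0p assms by (intro fibre_empty) auto
  next
    show "fibre \<delta> \<gamma> 1 t0 = {pi/2}" using t0 t0p assms by (intro fibre_top) auto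
  next
    fix \<tau> assume "t0 < \<tau> \<and> \<tau> < 1"
    then show "card (fibre \<delta> \<gamma> 1 \<tau>) = 2" using hi[of \<tau>] t0p assms by (intro fibre_card2) auto
  next
    show "fibre \<delta> \<gamma> 1 1 = {3*pi/2}" using fibre_one assms by simp
  next
    have m: "min t0 (1-t0) \<le> t0" "min t0 (1-t0) \<le> 1 - t0" by auto
    show "supercritical \<delta> \<gamma> 1 t0 (pi/2)"
    proof (rule super_gen[where \<eta> = "min t0 (1 - t0)"])
      fix \<tau> assume h: "t0 < \<tau>" "\<tau> < t0 + min t0 (1 - t0)"
      then show "0 < F_fun \<delta> \<tau> \<and> F_fun \<delta> \<tau> < 2*\<gamma>" using m by (intro hi) auto
    next
      fix \<tau> assume h: "t0 - min t0 (1 - t0) < \<tau>" "\<tau> < t0"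
      then show "F_fun \<delta> \<tau> > 2*\<gamma>" using m by (intro lo) auto
    qed (use t0 t0p assms m in auto)
  next
    have "g_fun \<delta> \<gamma> 1 1 (3*pi/2) = 0"
      using g_iff[of 1 \<gamma> \<delta> "3*pi/2"] assms F_one[of \<delta>] sin_3pi2 by simp
    then show "fold_point \<delta> \<gamma> 1 1 (3*pi/2)" using cos_3pi2 by (intro fold_pt) auto
  qed
qed


theorem mainTheorem4:
  fixes \<delta> \<gamma> :: real
  assumes "\<gamma> > 0" and "\<delta> > 1"
  shows
   "(\<delta> < Phi \<and> \<gamma> > M_F \<delta> / 2 \<longrightarrow>
       (\<forall>\<tau>. 0 < \<tau> \<and> \<tau> < 1 \<longrightarrow> card (fibre \<delta> \<gamma> 1 \<tau>) = 2) \<and>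
       fibre \<delta> \<gamma> 1 1 = {3*pi/2} \<and>
       conv_to_3pi2 \<delta> \<gamma> 1)
  \<and> (\<delta> < Phi \<and> \<gamma> < M_F \<delta> / 2 \<longrightarrow>
       (\<exists>a b. 0 < a \<and> a < b \<and> b < 1 \<and>
          (\<forall>\<tau>. (0 < \<tau> \<and> \<tau> < a) \<or> (b < \<tau> \<and> \<tau> < 1) \<longrightarrow> card (fibre \<delta> \<gamma> 1 \<tau>) = 2) \<and>
          fibre \<delta> \<gamma> 1 a = {pi/2} \<and> fibre \<delta> \<gamma> 1 b = {pi/2} \<and>
          (\<forall>\<tau>. a < \<tau> \<and> \<tau> < b \<longrightarrow> fibre \<delta> \<gamma> 1 \<tau> = {}) \<and>
          fibre \<delta> \<gamma> 1 1 = {3*pi/2} \<and>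
          subcritical \<delta> \<gamma> 1 a (pi/2) \<and> supercritical \<delta> \<gamma> 1 b (pi/2) \<and>
          conv_to_3pi2 \<delta> \<gamma> 1))
  \<and> (\<delta> > Phi \<longrightarrow>
       (\<exists>\<tau>0. 0 < \<tau>0 \<and> \<tau>0 < 1 \<and>
          (\<forall>\<tau>. 0 < \<tau> \<and> \<tau> < \<tau>0 \<longrightarrow> fibre \<delta> \<gamma> 1 \<tau> = {}) \<and>
          fibre \<delta> \<gamma> 1 \<tau>0 = {pi/2} \<and>
          (\<forall>\<tau>. \<tau>0 < \<tau> \<and> \<tau> < 1 \<longrightarrow> card (fibre \<delta> \<gamma> 1 \<tau>) = 2) \<and>
          fibre \<delta> \<gamma> 1 1 = {3*pi/2} \<and>
          supercritical \<delta> \<gamma> 1 \<tau>0 (pi/2) \<and> fold_point \<delta> \<gamma> 1 1 (3*pi/2)))"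
proof -
  have A: "\<delta> < Phi \<and> \<gamma> > M_F \<delta> / 2 \<longrightarrow>
       (\<forall>\<tau>. 0 < \<tau> \<and> \<tau> < 1 \<longrightarrow> card (fibre \<delta> \<gamma> 1 \<tau>) = 2) \<and>
       fibre \<delta> \<gamma> 1 1 = {3*pi/2} \<and> conv_to_3pi2 \<delta> \<gamma> 1"
    using part_a assms by blast
  show ?thesis
    using A part_b[OF assms(1,2)] part_c[OF assms(1,2)] by blast
qed

end
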